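(* Let $X,Y\subseteq\Sigma^*$. If there exists $k\in\mathbb{N}$ such that for every $x\in X$ there exists $y\in Y$ with $\mathrm{ed}(x,y)<k$, and for every $y\in Y$ there exists $x\in X$ with $\mathrm{ed}(x,y)<k$, then $D(X,Y)=0$ for every $D\in\{\mathrm{AH}_{\mathrm{ned}},\mathrm{AH}_{\mathrm{ged}},\mathrm{AH}_{\mathrm{ced}}\}$.
   Context: $\Sigma$ is a finite alphabet. An edit path from $x$ to $y$ is a sequence $p=(a_1,b_1)\cdots(a_n,b_n)$ with $(a_i,b_i)\in(\Sigma\cup\{\varepsilon\})^2\setminus\{(\varepsilon,\varepsilon)\}$, $a_1\cdots a_n=x$, $b_1\cdots b_n=y$; $|p|=n$, $\mathrm{wgt}(p)=|\{i:a_i\ne b_i\}|$. $\mathrm{ed}(x,y)=\min_p\mathrm{wgt}(p)$ (Levenshtein distance); $\mathrm{ned}(x,y)=\min_p\mathrm{wgt}(p)/|p|$ ($\mathrm{ned}(\varepsilon,\varepsilon)=0$); $\mathrm{ged}(x,y)=\frac{2\mathrm{ed}(x,y)}{|x|+|y|+\mathrm{ed}(x,y)}$ ($0$ if $x=y=\varepsilon$); $\mathrm{ced}(x,y)$ is the minimum, over sequences $x=u_0,\dots,u_k=y$ with $\mathrm{ed}(u_{i-1},u_i)=1$, of $\sum_{i=1}^k1/\max(|u_{i-1}|,|u_i|)$. For a word distance $d$: $\overrightarrow{\mathrm{AH}}_{d}(X,Y)=\lim_{k\to\infty}\sup_{x\in X,|x|\ge k}\inf_{y\in Y}d(x,y)$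 (empty supremum $=0$) and $\mathrm{AH}_d(X,Y)=\max\{\overrightarrow{\mathrm{AH}}_{d}(X,Y),\overrightarrow{\mathrm{AH}}_{d}(Y,X)\}$. *)

theory Defs
  imports "HOL-Analysis.Analysis"
begin

text \<open>Words over a finite alphabet 'a (class finite) are lists. An edit step is a pair of
  optional letters (None = epsilon), not both None.\<close>

fun opt_word :: "'a option \<Rightarrow> 'a list" where
  "opt_word None = []"
| "opt_word (Some c) = [c]"

definition edit_path :: "'a list \<Rightarrow> 'a list \<Rightarrow> ('a option \<times> 'a option) list \<Rightarrow> bool" where
  "edit_path x y p \<longleftrightarrow>
     (\<forall>e\<in>set p. e \<noteq> (None, None)) \<and>
     concat (map (\<lambda>e. opt_word (fst e)) p) = x \<and>
     concat (map (\<lambda>e. opt_word (snd e)) p) = y"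

definition wgt :: "('a option \<times> 'a option) list \<Rightarrow> nat" where
  "wgt p = length (filter (\<lambda>e. fst e \<noteq> snd e) p)"

definition ed :: "'a::finite list \<Rightarrow> 'a list \<Rightarrow> nat" where
  "ed x y = Inf {wgt p | p. edit_path x y p}"

definition ned :: "'a::finite list \<Rightarrow> 'a list \<Rightarrow> real" where
  "ned x y = (if x = [] \<and> y = [] then 0
              else Inf {real (wgt p) / real (length p) | p. edit_path x y p})"

definition ged :: "'a::finite list \<Rightarrow> 'a list \<Rightarrow> real" where
  "ged x y = (if x = [] \<and> y = [] then 0
              else 2 * real (ed x y) / (real (length x) + real (length y) + real (ed x y)))"

definition ced :: "'a::finite list \<Rightarrow> 'a list \<Rightarrow> real" where
  "ced x y = Inf {(\<Sum>i<length us - 1.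
                     1 / real (max (length (us ! i)) (length (us ! Suc i)))) | us.
                  us \<noteq> [] \<and> hd us = x \<and> last us = y \<and>
                  (\<forall>i < length us - 1. ed (us ! i) (us ! Suc i) = 1)}"

text \<open>Directed asymptotic Hausdorff distance (values in extended reals; the empty
  supremum is 0, the empty infimum is +infinity).\<close>
definition dirAH :: "('b list \<Rightarrow> 'b list \<Rightarrow> real) \<Rightarrow> 'b list set \<Rightarrow> 'b list set \<Rightarrow> ereal" where
  "dirAH d X Y = lim (\<lambda>k::nat.
      (let S = {(INF y\<in>Y. ereal (d x y)) | x. x \<in> X \<and> length x \<ge> k}
       in if S = {} then 0 else Sup S))"

definition AH :: "('b list \<Rightarrow> 'b list \<Rightarrow> real) \<Rightarrow> 'b list set \<Rightarrow> 'b list set \<Rightarrow> ereal" where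
  "AH d X Y = max (dirAH d X Y) (dirAH d Y X)"

end

theory Submission
  imports Defs
begin

definition src :: "('a option \<times> 'a option) list \<Rightarrow> 'a list" where
  "src p = concat (map (\<lambda>e. opt_word (fst e)) p)"
definition tgt :: "('a option \<times> 'a option) list \<Rightarrow> 'a list" where
  "tgt p = concat (map (\<lambda>e. opt_word (snd e)) p)"

lemma src_simps[simp]: "src [] = []" "src (e # p) = opt_word (fst e) @ src p"
  by (auto simp: src_def)
lemma tgt_simps[simp]: "tgt [] = []" "tgt (e # p) = opt_word (snd e) @ tgt p"
  by (auto simp: tgt_def)

lemma edit_path_alt: "edit_path x y p \<longleftrightarrow> (\<forall>e\<in>set p. e \<noteq> (None, None)) \<and> src p = x \<and> tgt p = y"
  by (simp add: edit_path_def src_def tgt_def)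

lemma opt_word_len: "length (opt_word a) \<le> 1"
  by (cases a) auto

lemma opt_word_inj: "opt_word a = opt_word b \<longleftrightarrow> a = b"
  by (cases a; cases b) auto

lemma src_len: "length (src p) \<le> length p"
proof (induction p)
  case (Cons e p) then show ?case using opt_word_len[of "fst e"] by simp
qed simp

definition triv_path :: "'a list \<Rightarrow> 'a list \<Rightarrow> ('a option \<times> 'a option) list" where
  "triv_path x y = map (\<lambda>c. (Some c, None)) x @ map (\<lambda>c. (None, Some c)) y"

lemma src_append[simp]: "src (p @ q) = src p @ src q" by (simp add: src_def)
lemma tgt_append[simp]: "tgt (p @ q) = tgt p @ tgt q" by (simp add: tgt_def)
lemma wgt_append[simp]: "wgt (p @ q) = wgt p + wgt q" by (simp add: wgt_def)
lemma wgt_Cons[simp]: "wgt (e # q) = (if fst e \<noteq> snd e then Suc (wgt q) else wgt q)" by (simp add: wgt_def)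
lemma wgt_Nil[simp]: "wgt [] = 0" by (simp add: wgt_def)

lemma path_exists: "edit_path x y (triv_path x y)"
proof -
  have "src (map (\<lambda>c. (Some c, None)) x) = x" by (induction x) auto
  moreover have "tgt (map (\<lambda>c. (Some c, None)) x) = []" by (induction x) auto
  moreover have "src (map (\<lambda>c. (None, Some c)) y) = []" by (induction y) auto
  moreover have "tgt (map (\<lambda>c. (None, Some c)) y) = y" by (induction y) auto
  ultimately show ?thesis by (auto simp: edit_path_alt triv_path_def)
qed

lemma ed_attained: "\<exists>p. edit_path x y p \<and> wgt p = ed x y"
proof -
  have "{wgt p | p. edit_path x y p} \<noteq> {}" using path_exists by blast
  from Inf_nat_def1[OF this] show ?thesis unfolding ed_def by auto
qed

lemma ed_le: "edit_path x y p \<Longrightarrow> ed x y \<le> wgt p"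
  unfolding ed_def by (rule cInf_lower) auto

lemma wgt0: "wgt p = 0 \<Longrightarrow> src p = tgt p"
  by (induction p) (auto split: if_splits)

lemma ed0: "ed x y = 0 \<Longrightarrow> x = y"
  using ed_attained[of x y] wgt0 by (auto simp: edit_path_alt)

lemma swap_path: "edit_path x y p \<Longrightarrow> edit_path y x (map prod.swap p) \<and> wgt (map prod.swap p) = wgt p"
proof -
  have "src (map prod.swap p) = tgt p \<and> tgt (map prod.swap p) = src p \<and> wgt (map prod.swap p) = wgt p"
    by (induction p) auto
  then show "edit_path x y p \<Longrightarrow> ?thesis" by (auto simp: edit_path_alt)
qed

lemma ed_path: "ed x y < k \<Longrightarrow> \<exists>p. edit_path x y p \<and> wgt p < k"
  using ed_attained[of x y] by auto

lemma dirAH_zero: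
  fixes d :: "'b list \<Rightarrow> 'b list \<Rightarrow> real"
  assumes nonneg: "\<And>x y. 0 \<le> d x y" and C: "C \<ge> 0"
    and bound: "\<And>x. x \<in> X \<Longrightarrow> length x \<ge> N \<Longrightarrow> \<exists>y\<in>Y. d x y \<le> C / real (length x)"
  shows "dirAH d X Y = 0"
proof -
  define f where "f = (\<lambda>k::nat.
      (let S = {(INF y\<in>Y. ereal (d x y)) | x. x \<in> X \<and> length x \<ge> k}
       in if S = {} then 0 else Sup S))"
  have ge: "0 \<le> f n" for n
  proof -
    have "0 \<le> (INF y\<in>Y. ereal (d x y))" for x by (rule INF_greatest) (simp add: nonneg)
    then show ?thesis unfolding f_def Let_def
      by (auto intro: order.trans[OF _ Sup_upper])
  qed
  have le: "f n \<le> ereal (C / real n)" if n: "n \<ge> max N 1" for n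
  proof -
    have "(INF y\<in>Y. ereal (d x y)) \<le> ereal (C / real n)" if x: "x \<in> X" "length x \<ge> n" for x
    proof -
      obtain y where y: "y \<in> Y" "d x y \<le> C / real (length x)" using bound[of x] x n by auto
      have "0 < real (length x) * real n" using x n by (intro mult_pos_pos) auto
      then have "C / real (length x) \<le> C / real n" using x n C
        by (intro divide_left_mono) auto
      then have "(INF y\<in>Y. ereal (d x y)) \<le> ereal (d x y)" using y by (intro INF_lower) auto
      also have "\<dots> \<le> ereal (C / real n)" using y \<open>C / real (length x) \<le> C / real n\<close> by simp
      finally show ?thesis .
    qed
    then have *: "\<forall>z \<in> {(INF y\<in>Y. ereal (d x y)) | x. x \<in> X \<and> length x \<ge> n}. z \<le> ereal (C / real n)"
      by blast
    have "0 \<le> ereal (C / real n)" using C by simp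
    moreover have "Sup {(INF y\<in>Y. ereal (d x y)) | x. x \<in> X \<and> length x \<ge> n} \<le> ereal (C / real n)"
      using * by (intro Sup_least) blast
    ultimately show ?thesis unfolding f_def Let_def by simp
  qed
  have lim: "(\<lambda>n. ereal (C / real n)) \<longlonglongrightarrow> 0"
    using tendsto_ereal[OF lim_const_over_n[of C]] by (simp add: zero_ereal_def)
  have ev1: "eventually (\<lambda>n. 0 \<le> f n) sequentially" using ge by simp
  have ev2: "eventually (\<lambda>n. f n \<le> ereal (C / real n)) sequentially"
    unfolding eventually_sequentially using le by blast
  have "f \<longlonglongrightarrow> 0" by (rule tendsto_sandwich[OF ev1 ev2 tendsto_const lim])
  then have "lim f = 0" by (rule limI)
  then show ?thesis unfolding dirAH_def f_def .
qed


fun cw :: "('a option \<times> 'a option) list \<Rightarrow> 'a list list" where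
  "cw [] = [[]]"
| "cw (e # p) = (if fst e = snd e then map (\<lambda>w. opt_word (fst e) @ w) (cw p)
     else (opt_word (fst e) @ src p) # map (\<lambda>w. opt_word (snd e) @ w) (cw p))"

lemma cw_basic: "cw p \<noteq> [] \<and> hd (cw p) = src p \<and> last (cw p) = tgt p \<and> length (cw p) = Suc (wgt p)"
  by (induction p) (auto simp: hd_map last_map)

definition one_edit :: "'a list \<Rightarrow> 'a list \<Rightarrow> bool" where
  "one_edit u v \<longleftrightarrow> u \<noteq> v \<and> (\<exists>q. edit_path u v q \<and> wgt q \<le> 1)"

definition idp :: "'a list \<Rightarrow> ('a option \<times> 'a option) list" where
  "idp c = map (\<lambda>ch. (Some ch, Some ch)) c"

lemma idp_props: "src (idp c) = c \<and> tgt (idp c) = c \<and> wgt (idp c) = 0 \<and> (\<forall>e\<in>set (idp c). e \<noteq> (None, None))"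
  by (induction c) (auto simp: idp_def)

lemma one_edit_prepend: "one_edit u v \<Longrightarrow> one_edit (c @ u) (c @ v)"
proof -
  assume "one_edit u v"
  then obtain q where q: "u \<noteq> v" "edit_path u v q" "wgt q \<le> 1" by (auto simp: one_edit_def)
  have "edit_path (c @ u) (c @ v) (idp c @ q)" using q idp_props[of c] by (auto simp: edit_path_alt)
  moreover have "wgt (idp c @ q) \<le> 1" using q idp_props[of c] by simp
  ultimately show ?thesis using q unfolding one_edit_def by auto
qed

lemma one_edit_step: "a \<noteq> b \<Longrightarrow> one_edit (opt_word a @ s) (opt_word b @ s)"
proof -
  assume ab: "a \<noteq> b"
  have "edit_path (opt_word a @ s) (opt_word b @ s) ((a, b) # idp s)"
    using ab idp_props[of s] by (auto simp: edit_path_alt)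
  moreover have "wgt ((a, b) # idp s) \<le> 1" using ab idp_props[of s] by simp
  moreover have "opt_word a @ s \<noteq> opt_word b @ s" using ab opt_word_inj by auto
  ultimately show ?thesis unfolding one_edit_def by blast
qed

lemma cw_succ: "successively one_edit (cw p)"
proof (induction p)
  case Nil then show ?case by simp
next
  case (Cons e p)
  show ?case
  proof (cases "fst e = snd e")
    case True
    then show ?thesis using Cons
      by (auto simp: successively_map intro: successively_mono one_edit_prepend)
  next
    case False
    have "successively one_edit (map (\<lambda>w. opt_word (snd e) @ w) (cw p))"
      using Cons by (auto simp: successively_map intro: successively_mono one_edit_prepend)
    moreover have "one_edit (opt_word (fst e) @ src p) (opt_word (snd e) @ src p)"
      using False by (rule one_edit_step)
    ultimately show ?thesis using False cw_basic[of p]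
      by (auto simp: successively_Cons hd_map)
  qed
qed

lemma cw_len: "\<forall>w\<in>set (cw p). length (src p) \<le> length w + wgt p"
proof (induction p)
  case (Cons e p)
  then show ?case using opt_word_len[of "fst e"] by auto
qed simp

lemma succ_nth: "successively P xs \<Longrightarrow> i < length xs - 1 \<Longrightarrow> P (xs ! i) (xs ! Suc i)"
proof (induction xs arbitrary: i)
  case (Cons a xs)
  then show ?case
    by (cases i) (auto simp: successively_Cons hd_conv_nth)
qed simp

lemma one_edit_ed: "one_edit u v \<Longrightarrow> ed u v = 1"
proof -
  assume "one_edit u v"
  then obtain q where q: "u \<noteq> v" "edit_path u v q" "wgt q \<le> 1" by (auto simp: one_edit_def)
  have "ed u v \<le> 1" using ed_le[OF q(2)] q(3) by simp
  moreover have "ed u v \<noteq> 0" using ed0 q(1) by blast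
  ultimately show ?thesis by simp
qed

lemma cw_chain: "edit_path x y p \<Longrightarrow> cw p \<noteq> [] \<and> hd (cw p) = x \<and> last (cw p) = y \<and>
    (\<forall>i < length (cw p) - 1. ed (cw p ! i) (cw p ! Suc i) = 1)"
  using cw_basic[of p] succ_nth[OF cw_succ[of p]] one_edit_ed by (auto simp: edit_path_alt)

abbreviation cost :: "'a list list \<Rightarrow> real" where
  "cost us \<equiv> (\<Sum>i<length us - 1. 1 / real (max (length (us ! i)) (length (us ! Suc i))))"

lemma cost_nonneg: "0 \<le> cost us"
  by (intro sum_nonneg) auto

lemma ced_le: "edit_path x y p \<Longrightarrow> ced x y \<le> cost (cw p)"
  unfolding ced_def
  apply (rule cInf_lower)
  using cw_chain[of x y p] apply blast
  using cost_nonneg unfolding bdd_below_def by blast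

lemma ced_nonneg: "0 \<le> ced (x::'a::finite list) y"
  unfolding ced_def
  apply (rule cInf_greatest)
  using cw_chain[OF path_exists[of x y]] apply blast
  using cost_nonneg by blast

lemma ned_nonneg: "0 \<le> ned (x::'a::finite list) y"
  unfolding ned_def
  apply (cases "x = [] \<and> y = []")
   apply simp
  apply simp
  apply (rule cInf_greatest)
  using path_exists[of x y] by auto

lemma ged_nonneg: "0 \<le> ged (x::'a::finite list) y"
  unfolding ged_def by simp

lemma ged_bound:
  assumes "edit_path (x::'a::finite list) y p" "wgt p < k" "length x \<ge> 2*k+1"
  shows "ged x y \<le> real (2*k) / real (length x)"
proof -
  have e: "real (ed x y) \<le> real k" using ed_le[OF assms(1)] assms(2) by simp
  have "length x > 0" using assms(3) by linarith
  then have L: "real (length x) > 0" by simp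
  have "ged x y = 2 * real (ed x y) / (real (length x) + real (length y) + real (ed x y))"
    using assms(3) by (cases x) (simp_all add: ged_def)
  also have "\<dots> \<le> 2 * real (ed x y) / real (length x)"
    using L by (intro divide_left_mono mult_pos_pos add_pos_nonneg) auto
  also have "\<dots> \<le> real (2*k) / real (length x)"
    using L e by (intro divide_right_mono) auto
  finally show ?thesis .
qed

lemma ned_bound:
  assumes "edit_path (x::'a::finite list) y p" "wgt p < k" "length x \<ge> 2*k+1"
  shows "ned x y \<le> real (2*k) / real (length x)"
proof -
  have "length x > 0" using assms(3) by linarith
  then have L: "real (length x) > 0" by simp
  have lp: "length x \<le> length p" using src_len[of p] assms(1) by (auto simp: edit_path_alt)
  have "ned x y = Inf {real (wgt p) / real (length p) | p. edit_path x y p}"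
    using assms(3) by (cases x) (simp_all add: ned_def)
  also have "\<dots> \<le> real (wgt p) / real (length p)"
    apply (rule cInf_lower)
    using assms(1) apply blast
    unfolding bdd_below_def by (rule exI[of _ 0]) auto
  also have "\<dots> \<le> real (wgt p) / real (length x)"
    using L lp by (intro divide_left_mono mult_pos_pos) auto
  also have "\<dots> \<le> real (2*k) / real (length x)"
    using L assms(2) by (intro divide_right_mono) auto
  finally show ?thesis .
qed

lemma ced_bound:
  assumes "edit_path (x::'a::finite list) y p" "wgt p < k" "length x \<ge> 2*k+1"
  shows "ced x y \<le> real (2*k) / real (length x)"
proof -
  define us where "us = cw p"
  define m where "m = real (length x) - real (wgt p)"
  have m: "m > 0" using assms(2,3) unfolding m_def by simp
  have len: "length us - 1 = wgt p" using cw_basic[of p] by (simp add: us_def)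
  have trm: "1 / real (max (length (us ! i)) (length (us ! Suc i))) \<le> 1 / m" if i: "i < length us - 1" for i
  proof -
    have "us ! i \<in> set us" using i by simp
    then have "length x \<le> length (us ! i) + wgt p"
      using cw_len[of p] assms(1) by (auto simp: us_def edit_path_alt)
    then have "m \<le> real (max (length (us ! i)) (length (us ! Suc i)))" unfolding m_def by simp
    then show ?thesis using m by (intro divide_left_mono) auto
  qed
  have "ced x y \<le> cost us" using ced_le[OF assms(1)] by (simp add: us_def)
  also have "\<dots> \<le> (\<Sum>i<length us - 1. 1 / m)" using trm by (intro sum_mono) auto
  also have "\<dots> = real (wgt p) / m" using len by simp
  also have "\<dots> \<le> real (2*k) / real (length x)"
  proof -
    have w: "real (wgt p) \<le> real k" using assms(2) by simp
    have Lk: "real (length x) \<ge> 2 * real (wgt p)" using assms(2,3) by simp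
    have a: "real (wgt p) * real (length x) \<le> real k * real (length x)"
      using w by (intro mult_right_mono) auto
    have "0 \<le> real k * (real (length x) - 2 * real (wgt p))"
      using Lk by (intro mult_nonneg_nonneg) auto
    then have b: "real k * real (length x) \<le> real (2*k) * m"
      unfolding m_def by (simp add: algebra_simps)
    have "real (wgt p) * real (length x) \<le> real (2*k) * m" using a b by linarith
    moreover have "length x > 0" using assms(3) by linarith
    then have "real (length x) > 0" by simp
    ultimately show ?thesis using m by (simp add: divide_simps)
  qed
  finally show ?thesis .
qed

lemma AH_gen:
  fixes d :: "'a::finite list \<Rightarrow> 'a list \<Rightarrow> real"
  assumes nonneg: "\<And>x y. 0 \<le> d x y"
    and bnd: "\<And>x y p k. edit_path x y p \<Longrightarrow> wgt p < k \<Longrightarrow> length x \<ge> 2*k+1 \<Longrightarrow> d x y \<le> real (2*k) / real (length x)"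
    and k: "(\<forall>x\<in>X. \<exists>y\<in>Y. ed x y < k) \<and> (\<forall>y\<in>Y. \<exists>x\<in>X. ed x y < k)"
  shows "AH d X Y = 0"
proof -
  have 1: "dirAH d X Y = 0"
  proof (rule dirAH_zero[OF nonneg, of "real (2*k)" X "2*k+1"])
    fix x assume x: "x \<in> X" "2*k+1 \<le> length x"
    then obtain y where y: "y \<in> Y" "ed x y < k" using k by blast
    then obtain p where "edit_path x y p" "wgt p < k" using ed_path by blast
    then show "\<exists>y\<in>Y. d x y \<le> real (2*k) / real (length x)" using bnd x y by blast
  qed simp
  have 2: "dirAH d Y X = 0"
  proof (rule dirAH_zero[OF nonneg, of "real (2*k)" Y "2*k+1"])
    fix y assume y: "y \<in> Y" "2*k+1 \<le> length y"
    then obtain x where x: "x \<in> X" "ed x y < k" using k by blast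
    then obtain p where "edit_path x y p" "wgt p < k" using ed_path by blast
    then have "edit_path y x (map prod.swap p)" "wgt (map prod.swap p) < k" using swap_path[OF \<open>edit_path x y p\<close>] \<open>wgt p < k\<close> by auto
    then show "\<exists>x\<in>X. d y x \<le> real (2*k) / real (length y)" using bnd x y by blast
  qed simp
  show ?thesis using 1 2 by (simp add: AH_def)
qed

theorem mainTheorem8:
  fixes X Y :: "'a::finite list set"
  assumes "\<exists>k::nat. (\<forall>x\<in>X. \<exists>y\<in>Y. ed x y < k) \<and> (\<forall>y\<in>Y. \<exists>x\<in>X. ed x y < k)"
  shows "AH ned X Y = 0 \<and> AH ged X Y = 0 \<and> AH ced X Y = 0"
proof -
  obtain k where k: "(\<forall>x\<in>X. \<exists>y\<in>Y. ed x y < k) \<and> (\<forall>y\<in>Y. \<exists>x\<in>X. ed x y < k)"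
    using assms by blast
  have 1: "AH ned X Y = 0"
    by (rule AH_gen[OF ned_nonneg _ k], rule ned_bound, assumption+)
  have 2: "AH ged X Y = 0"
    by (rule AH_gen[OF ged_nonneg _ k], rule ged_bound, assumption+)
  have 3: "AH ced X Y = 0"
    by (rule AH_gen[OF ced_nonneg _ k], rule ced_bound, assumption+)
  show ?thesis using 1 2 3 by blast
qed

end
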